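(* Let $(B,+,\circ)$ be a left brace with Yang–Baxter map $r$, and let $X\subseteq B$ be such that $(X,r)$ is a nondegenerate involutive solution of the set-theoretic Yang–Baxter equation. Let $c\in B$ be central in the group $(B,\circ)$. (1) If the map $k_1(x)=c\circ x-c$ satisfies $k_1(X)\subseteq X$, then $k_1:X\to X$ is $\mathcal G(X,r)$-equivariant. (2) If the map $k_2(x)=c\circ x+c$ satisfies $k_2(X)\subseteq X$, then $k_2:X\to X$ is $\mathcal G(X,r)$-equivariant if and only if $2\,(c\circ x)=2x+2c$ for all $x\in X$.
   Context: A (left) brace is a triple $(B,+,\circ)$ such that $(B,+)$ is an abelian group with identity $0$, $(B,\circ)$ is a group, and $x\circ(y+z)=x\circ y+x\circ z-x$ for all $x,y,z\in B$; the inverse of $x$ in $(B,\circ)$ is written $x^{-1}$. The Yang–Baxter map of the brace is $r(x,y)=(\sigma_x(y),\tau_y(x))$ with $\sigma_x(y)=x\circ y-x$ and $\tau_y(x)=(\sigma_x(y))^{-1}\circ x-(\sigma_x(y))^{-1}$. For $X\subseteq B$, $(X,r)$ being a solution of the set-theoretic Yang–Baxter equation means $r(X\times X)\subseteq X\times X$ and the restriction of $r$ to $X\times X$ satisfies $(\mathrm{id}\times r)(r\times\mathrm{id})(\mathrm{id}\times r)=(r\times\mathrm{id})(\mathrm{id}\times r)(r\times\mathrm{id})$; it is involutive if $r^2=\mathrm{id}$ on $X\times X$, and nondegenerate if each $\sigma_x$ and each $\tau_y$ ($x,y\in X$) restricts to a bijection $X\to X$. A map $k:X\to X$ is $\mathcal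 G(X,r)$-equivariant if $k\sigma_x=\sigma_x k$ on $X$ for all $x\in X$. *)

theory Defs
  imports Main
begin

definition left_brace :: "('a::ab_group_add \<Rightarrow> 'a \<Rightarrow> 'a) \<Rightarrow> bool" where
  "left_brace circ \<longleftrightarrow>
     (\<forall>x y z. circ (circ x y) z = circ x (circ y z)) \<and>
     (\<exists>e. (\<forall>x. circ e x = x \<and> circ x e = x) \<and>
          (\<forall>x. \<exists>y. circ x y = e \<and> circ y x = e)) \<and>
     (\<forall>x y z. circ x (y + z) = circ x y + circ x z - x)"

definition circ_unit :: "('a \<Rightarrow> 'a \<Rightarrow> 'a) \<Rightarrow> 'a" where
  "circ_unit circ = (THE e. \<forall>x. circ e x = x \<and> circ x e = x)"

definition circ_inv :: "('a \<Rightarrow> 'a \<Rightarrow> 'a) \<Rightarrow> 'a \<Rightarrow> 'a" where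
  "circ_inv circ x = (THE y. circ x y = circ_unit circ \<and> circ y x = circ_unit circ)"

definition brace_sigma :: "('a::ab_group_add \<Rightarrow> 'a \<Rightarrow> 'a) \<Rightarrow> 'a \<Rightarrow> 'a \<Rightarrow> 'a" where
  "brace_sigma circ x y = circ x y - x"

definition brace_tau :: "('a::ab_group_add \<Rightarrow> 'a \<Rightarrow> 'a) \<Rightarrow> 'a \<Rightarrow> 'a \<Rightarrow> 'a" where
  "brace_tau circ y x =
     circ (circ_inv circ (brace_sigma circ x y)) x - circ_inv circ (brace_sigma circ x y)"

definition brace_r :: "('a::ab_group_add \<Rightarrow> 'a \<Rightarrow> 'a) \<Rightarrow> 'a \<times> 'a \<Rightarrow> 'a \<times> 'a" where
  "brace_r circ p = (brace_sigma circ (fst p) (snd p), brace_tau circ (snd p) (fst p))"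

definition r_id :: "('a \<times> 'a \<Rightarrow> 'a \<times> 'a) \<Rightarrow> 'a \<times> 'a \<times> 'a \<Rightarrow> 'a \<times> 'a \<times> 'a" where
  "r_id r t = (case t of (x, y, z) \<Rightarrow> (fst (r (x, y)), snd (r (x, y)), z))"

definition id_r :: "('a \<times> 'a \<Rightarrow> 'a \<times> 'a) \<Rightarrow> 'a \<times> 'a \<times> 'a \<Rightarrow> 'a \<times> 'a \<times> 'a" where
  "id_r r t = (case t of (x, y, z) \<Rightarrow> (x, fst (r (y, z)), snd (r (y, z))))"

definition ybe_solution :: "'a set \<Rightarrow> ('a \<times> 'a \<Rightarrow> 'a \<times> 'a) \<Rightarrow> bool" where
  "ybe_solution X r \<longleftrightarrow> r ` (X \<times> X) \<subseteq> X \<times> X \<and>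
     (\<forall>t \<in> X \<times> X \<times> X. id_r r (r_id r (id_r r t)) = r_id r (id_r r (r_id r t)))"

definition involutive_on :: "'a set \<Rightarrow> ('a \<times> 'a \<Rightarrow> 'a \<times> 'a) \<Rightarrow> bool" where
  "involutive_on X r \<longleftrightarrow> (\<forall>p \<in> X \<times> X. r (r p) = p)"

definition brace_nondegenerate :: "('a::ab_group_add \<Rightarrow> 'a \<Rightarrow> 'a) \<Rightarrow> 'a set \<Rightarrow> bool" where
  "brace_nondegenerate circ X \<longleftrightarrow>
     (\<forall>x \<in> X. bij_betw (brace_sigma circ x) X X \<and> bij_betw (brace_tau circ x) X X)"

definition G_equivariant :: "('a::ab_group_add \<Rightarrow> 'a \<Rightarrow> 'a) \<Rightarrow> 'a set \<Rightarrow> ('a \<Rightarrow> 'a) \<Rightarrow> bool" where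
  "G_equivariant circ X k \<longleftrightarrow>
     (\<forall>x \<in> X. \<forall>y \<in> X. k (brace_sigma circ x y) = brace_sigma circ x (k y))"

end

theory Submission
  imports Defs
begin

lemma lb_add: "left_brace circ \<Longrightarrow> circ x (y + z) = circ x y + circ x z - x"
  unfolding left_brace_def by blast

lemma lb_assoc: "left_brace circ \<Longrightarrow> circ (circ x y) z = circ x (circ y z)"
  unfolding left_brace_def by blast

lemma lb_diff: "left_brace circ \<Longrightarrow> circ x (y - z) = circ x y - circ x z + x"
proof -
  assume a: "left_brace circ"
  have "circ x y = circ x ((y - z) + z)" by simp
  also have "\<dots> = circ x (y - z) + circ x z - x" using lb_add[OF a] by blast
  finally show ?thesis by (simp add: algebra_simps)
qed

theorem mainTheorem3:
  fixes circ :: "'a::ab_group_add \<Rightarrow> 'a \<Rightarrow> 'a" and X :: "'a set" and c :: 'a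
  assumes "left_brace circ"
    and "ybe_solution X (brace_r circ)"
    and "involutive_on X (brace_r circ)"
    and "brace_nondegenerate circ X"
    and "\<forall>x. circ c x = circ x c"
  shows "((\<lambda>x. circ c x - c) ` X \<subseteq> X \<longrightarrow> G_equivariant circ X (\<lambda>x. circ c x - c)) \<and>
         ((\<lambda>x. circ c x + c) ` X \<subseteq> X \<longrightarrow>
            (G_equivariant circ X (\<lambda>x. circ c x + c) \<longleftrightarrow>
             (\<forall>x \<in> X. circ c x + circ c x = (x + x) + (c + c))))"
proof -
  note B = assms(1)
  have L1: "circ c (brace_sigma circ x y) - c = circ (circ c x) y - circ c x" for x y
    unfolding brace_sigma_def using lb_diff[OF B, of c "circ x y" x] lb_assoc[OF B, of c x y]
    by (simp add: algebra_simps)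
  have R1: "brace_sigma circ x (circ c y - c) = circ (circ x c) y - circ x c" for x y
    unfolding brace_sigma_def using lb_diff[OF B, of x "circ c y" c] lb_assoc[OF B, of x c y]
    by (simp add: algebra_simps)
  have L2: "circ c (brace_sigma circ x y) + c = circ (circ c x) y - circ c x + c + c" for x y
    unfolding brace_sigma_def using lb_diff[OF B, of c "circ x y" x] lb_assoc[OF B, of c x y]
    by (simp add: algebra_simps)
  have R2: "brace_sigma circ x (circ c y + c) = circ (circ x c) y + circ x c - x - x" for x y
    unfolding brace_sigma_def using lb_add[OF B, of x "circ c y" c] lb_assoc[OF B, of x c y]
    by (simp add: algebra_simps)
  have C: "circ x c = circ c x" for x using assms(5) by simp
  have P1: "G_equivariant circ X (\<lambda>x. circ c x - c)"
    unfolding G_equivariant_def using L1 R1 C by simp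
  have eq2: "(circ c (brace_sigma circ x y) + c = brace_sigma circ x (circ c y + c))
      \<longleftrightarrow> circ c x + circ c x = (x + x) + (c + c)" for x y
  proof -
    have "(circ c (brace_sigma circ x y) + c = brace_sigma circ x (circ c y + c))
       \<longleftrightarrow> circ (circ c x) y - circ c x + c + c = circ (circ c x) y + circ c x - x - x"
      using L2 R2 C by simp
    also have "\<dots> \<longleftrightarrow> circ c x + circ c x = (x + x) + (c + c)"
    proof
      assume h: "circ (circ c x) y - circ c x + c + c = circ (circ c x) y + circ c x - x - x"
      have "circ c x + circ c x = (circ (circ c x) y + circ c x - x - x) - circ (circ c x) y + circ c x + x + x"
        by (simp add: algebra_simps)
      also have "\<dots> = (circ (circ c x) y - circ c x + c + c) - circ (circ c x) y + circ c x + x + x"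
        using h by simp
      also have "\<dots> = (x + x) + (c + c)" by (simp add: algebra_simps)
      finally show "circ c x + circ c x = (x + x) + (c + c)" .
    next
      assume h: "circ c x + circ c x = (x + x) + (c + c)"
      have "circ (circ c x) y + circ c x - x - x = circ (circ c x) y + (circ c x + circ c x) - circ c x - x - x"
        by (simp add: algebra_simps)
      also have "\<dots> = circ (circ c x) y + ((x + x) + (c + c)) - circ c x - x - x" using h by simp
      also have "\<dots> = circ (circ c x) y - circ c x + c + c" by (simp add: algebra_simps)
      finally show "circ (circ c x) y - circ c x + c + c = circ (circ c x) y + circ c x - x - x" by simp
    qed
    finally show ?thesis .
  qed
  have P2: "G_equivariant circ X (\<lambda>x. circ c x + c) \<longleftrightarrow>
             (\<forall>x \<in> X. circ c x + circ c x = (x + x) + (c + c))"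
    unfolding G_equivariant_def using eq2 by blast
  show ?thesis using P1 P2 by blast
qed

end
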